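(* Let $K\ge3$ and let all arms share the same exponential family with log-partition function $\mathcal{A}$ on an open convex $\Psi\subset\mathbb{R}^d$ (minimal representation, $\mathcal{A}$ strictly convex and $C^2$ with positive definite Hessian, conjugate $\mathcal{F}$ strictly convex and $C^2$). Let $\boldsymbol{\theta}\ne\boldsymbol{\theta}'\in\Psi$ with expectation parameters $\boldsymbol{\kappa}=\nabla\mathcal{A}(\boldsymbol{\theta})$, $\boldsymbol{\kappa}'=\nabla\mathcal{A}(\boldsymbol{\theta}')$. Put $c=\frac{K-2}{K-1}$ and, for $\lambda\in[0,1]$, $$\tilde{\boldsymbol{\kappa}}(\lambda)=\frac{\lambda\boldsymbol{\kappa}+(1-\lambda)c\,\boldsymbol{\kappa}'}{\lambda+(1-\lambda)c},\qquad\tilde{\boldsymbol{\eta}}(\lambda)=\nabla\mathcal{F}(\tilde{\boldsymbol{\kappa}}(\lambda)),$$ $$\Phi(\lambda)=\lambda D(\boldsymbol{\theta}\|\tilde{\boldsymbol{\eta}}(\lambda))+(1-\lambda)c\,D(\boldsymbol{\theta}'\|\tilde{\boldsymbol{\eta}}(\lambda)).$$ Then $\Phi$ is twice differentiable on $(0,1)$ with $\Phi''(\lambda)<0$ there; in particular $\Phi$ is strictly concave on $[0,1]$.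
   Context: $D(\boldsymbol{\eta}\|\boldsymbol{\eta}')=(\boldsymbol{\eta}-\boldsymbol{\eta}')^T\nabla\mathcal{A}(\boldsymbol{\eta})-\mathcal{A}(\boldsymbol{\eta})+\mathcal{A}(\boldsymbol{\eta}')$ is the Kullback–Leibler divergence between the family members with natural parameters $\boldsymbol{\eta}$ and $\boldsymbol{\eta}'$; $\nabla\mathcal{F}$ is the inverse of $\nabla\mathcal{A}$, and $\tilde{\boldsymbol{\kappa}}(\lambda)$ is assumed to lie in the domain where $\nabla\mathcal{F}$ maps into $\Psi$. (In the odd-arm problem, hypothesis $l$ is $\Theta_l=\{\overline{\boldsymbol{\eta}}:\boldsymbol{\eta}_l=\boldsymbol{\theta},\ \boldsymbol{\eta}_j=\boldsymbol{\theta}'\ \forall j\ne l,\ \boldsymbol{\theta}\ne\boldsymbol{\theta}'\}$, and $\Phi(\lambda)$ is the reduced objective obtained when weight $\lambda$ is put on the odd arm and weight $(1-\lambda)/(K-1)$ on each other arm.) *)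

theory Defs
  imports "HOL-Analysis.Analysis"
begin

definition strict_convex_on :: "'a::real_vector set \<Rightarrow> ('a \<Rightarrow> real) \<Rightarrow> bool" where
  "strict_convex_on S f \<longleftrightarrow>
     (\<forall>x\<in>S. \<forall>y\<in>S. \<forall>u::real. x \<noteq> y \<and> 0 < u \<and> u < 1 \<and> (1 - u) *\<^sub>R x + u *\<^sub>R y \<in> S \<longrightarrow>
        f ((1 - u) *\<^sub>R x + u *\<^sub>R y) < (1 - u) * f x + u * f y)"

definition strict_concave_on :: "'a::real_vector set \<Rightarrow> ('a \<Rightarrow> real) \<Rightarrow> bool" where
  "strict_concave_on S f \<longleftrightarrow> strict_convex_on S (\<lambda>x. - f x)"

definition KLdiv :: "('a::real_inner \<Rightarrow> real) \<Rightarrow> ('a \<Rightarrow> 'a) \<Rightarrow> 'a \<Rightarrow> 'a \<Rightarrow> real" where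
  "KLdiv A gradA eta eta' = inner (eta - eta') (gradA eta) - A eta + A eta'"

end

theory Submission
  imports Defs
begin

lemma concave_aux:
  fixes f f' :: "real \<Rightarrow> real"
  assumes der: "\<And>t. a \<le> t \<Longrightarrow> t \<le> b \<Longrightarrow> (f has_real_derivative f' t) (at t)"
    and dec: "\<And>s t. a \<le> s \<Longrightarrow> s < t \<Longrightarrow> t \<le> b \<Longrightarrow> f' t < f' s"
    and xy: "a \<le> x" "x < y" "y \<le> b" and u: "0 < u" "u < 1"
  shows "(1 - u) * f x + u * f y < f ((1 - u) * x + u * y)"
proof -
  define z where "z = (1 - u) * x + u * y"
  have zx: "z - x = u * (y - x)" and yz: "y - z = (1 - u) * (y - x)"
    by (simp_all add: z_def algebra_simps)
  have p1: "0 < u * (y - x)" and p2: "0 < (1 - u) * (y - x)" using u xy by simp_all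
  have "x < z" using zx p1 by linarith
  have "z < y" using yz p2 by linarith
  obtain p where p: "x < p" "p < z" "f z - f x = (z - x) * f' p"
    using MVT2[OF \<open>x < z\<close>, of f f'] der xy \<open>z < y\<close> by fastforce
  obtain q where q: "z < q" "q < y" "f y - f z = (y - z) * f' q"
    using MVT2[OF \<open>z < y\<close>, of f f'] der xy \<open>x < z\<close> by fastforce
  have "f' q < f' p" using dec[of p q] p q xy by linarith
  moreover have "0 < u * (1 - u) * (y - x)" using u xy by simp
  ultimately have "(u * (1 - u) * (y - x)) * f' q < (u * (1 - u) * (y - x)) * f' p"
    by (simp add: mult_strict_left_mono)
  moreover have "(1 - u) * (f z - f x) = (u * (1 - u) * (y - x)) * f' p"
    using p(3) zx by simp
  moreover have "u * (f y - f z) = (u * (1 - u) * (y - x)) * f' q"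
    using q(3) yz by simp
  ultimately have "u * (f y - f z) < (1 - u) * (f z - f x)" by linarith
  thus ?thesis unfolding z_def[symmetric] by (simp add: algebra_simps)
qed

lemma G_deriv:
  fixes A :: "'a::real_inner \<Rightarrow> real"
  assumes "(A has_derivative (\<lambda>h. inner h gA)) (at (gradF k))"
    and "(gradF has_derivative HFk) (at k)" and "gA = k"
  shows "((\<lambda>k. inner (gradF k) k - A (gradF k)) has_derivative (\<lambda>h. inner (gradF k) h)) (at k)"
proof -
  have 1: "((\<lambda>k. inner (gradF k) k) has_derivative (\<lambda>h. inner (gradF k) h + inner (HFk h) k)) (at k)"
    using has_derivative_inner[OF assms(2) has_derivative_ident] by simp
  have 2: "((\<lambda>k. A (gradF k)) has_derivative (\<lambda>h. inner (HFk h) k)) (at k)"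
    using diff_chain_at[OF assms(2) assms(1)] assms(3) by (simp add: o_def)
  have "((\<lambda>k. inner (gradF k) k - A (gradF k)) has_derivative
      (\<lambda>h. inner (gradF k) h + inner (HFk h) k - inner (HFk h) k)) (at k)"
    by (rule has_derivative_diff[OF 1 2])
  thus ?thesis by simp
qed

theorem mainTheorem16:
  fixes K :: nat
    and A F :: "'a::euclidean_space \<Rightarrow> real"
    and gradA gradF :: "'a \<Rightarrow> 'a"
    and HA HF :: "'a \<Rightarrow> 'a \<Rightarrow> 'a"
    and Psi :: "'a set"
    and \<theta> \<theta>' :: 'a
  assumes K3: "K \<ge> 3"
    and Psi_open: "open Psi" and Psi_convex: "convex Psi"
    \<comment> \<open>log-partition function A: strictly convex, C^2 with positive definite Hessian\<close>
    and A_grad: "\<And>x. x \<in> Psi \<Longrightarrow> GDERIV A x :> gradA x"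
    and A_hess: "\<And>x. x \<in> Psi \<Longrightarrow> (gradA has_derivative HA x) (at x)"
    and A_hess_cont: "\<And>v. continuous_on Psi (\<lambda>x. HA x v)"
    and A_hess_pd: "\<And>x v. x \<in> Psi \<Longrightarrow> v \<noteq> 0 \<Longrightarrow> inner v (HA x v) > 0"
    and A_strict: "strict_convex_on Psi A"
    \<comment> \<open>conjugate F on the mean-parameter space gradA ` Psi: strictly convex, C^2,
        with gradient gradF inverse to gradA\<close>
    and F_conj: "\<And>k. k \<in> gradA ` Psi \<Longrightarrow> F k = (SUP x\<in>Psi. inner k x - A x)"
    and F_grad: "\<And>k. k \<in> gradA ` Psi \<Longrightarrow> GDERIV F k :> gradF k"
    and F_hess: "\<And>k. k \<in> gradA ` Psi \<Longrightarrow> (gradF has_derivative HF k) (at k)"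
    and F_hess_cont: "\<And>v. continuous_on (gradA ` Psi) (\<lambda>k. HF k v)"
    and F_strict: "strict_convex_on (gradA ` Psi) F"
    and gradF_inv: "\<And>x. x \<in> Psi \<Longrightarrow> gradF (gradA x) = x"
    and \<theta>_in: "\<theta> \<in> Psi" and \<theta>'_in: "\<theta>' \<in> Psi" and \<theta>_ne: "\<theta> \<noteq> \<theta>'"
    \<comment> \<open>standing assumption: the tilted mean parameter lies where gradF maps into Psi\<close>
    and kt_dom: "\<And>l::real. 0 \<le> l \<Longrightarrow> l \<le> 1 \<Longrightarrow>
        (let c = (real K - 2) / (real K - 1) in
          (1 / (l + (1 - l) * c)) *\<^sub>R (l *\<^sub>R gradA \<theta> + ((1 - l) * c) *\<^sub>R gradA \<theta>'))
        \<in> gradA ` Psi"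
  shows "let c = (real K - 2) / (real K - 1);
             kt = (\<lambda>l::real. (1 / (l + (1 - l) * c)) *\<^sub>R (l *\<^sub>R gradA \<theta> + ((1 - l) * c) *\<^sub>R gradA \<theta>'));
             et = (\<lambda>l. gradF (kt l));
             Phi = (\<lambda>l. l * KLdiv A gradA \<theta> (et l) + (1 - l) * c * KLdiv A gradA \<theta>' (et l))
         in (\<exists>Phi' Phi''. \<forall>l\<in>{0<..<1}.
                (Phi has_real_derivative Phi' l) (at l) \<and>
                (Phi' has_real_derivative Phi'' l) (at l) \<and> Phi'' l < 0)
            \<and> strict_concave_on {0..1} Phi"
proof -
  define c where "c = (real K - 2) / (real K - 1)"
  define ka where "ka = gradA \<theta>"
  define ka' where "ka' = gradA \<theta>'"
  define d where "d = ka - ka'"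
  define w where "w = (\<lambda>l::real. l + (1 - l) * c)"
  define kt where "kt = (\<lambda>l::real. (1 / (l + (1 - l) * c)) *\<^sub>R (l *\<^sub>R gradA \<theta> + ((1 - l) * c) *\<^sub>R gradA \<theta>'))"
  define et where "et = (\<lambda>l. gradF (kt l))"
  define Phi where "Phi = (\<lambda>l. l * KLdiv A gradA \<theta> (et l) + (1 - l) * c * KLdiv A gradA \<theta>' (et l))"
  define G where "G = (\<lambda>k. inner (gradF k) k - A (gradF k))"
  define S where "S = {l::real. 0 < l + (1 - l) * c}"
  have K3': "real K \<ge> 3" using K3 by simp
  have c0: "0 < c" and c1: "c < 1" using K3' by (simp_all add: c_def field_simps)
  have wpos: "0 < w l" if "0 \<le> l" "l \<le> 1" for l
  proof -
    have "0 \<le> (1 - l) * c" using that c0 by simp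
    moreover have "0 < l \<or> 0 < (1 - l) * c" using that c0 by (cases "l = 1") auto
    ultimately show ?thesis unfolding w_def using that by linarith
  qed
  have S_open: "open S" unfolding S_def by (intro open_Collect_less continuous_intros)
  have S_w: "l \<in> S \<longleftrightarrow> 0 < w l" for l by (simp add: S_def w_def)
  have ktdom: "kt l \<in> gradA ` Psi" if "0 \<le> l" "l \<le> 1" for l
    using kt_dom[OF that] unfolding kt_def c_def Let_def .
  have inv2: "gradA (gradF k) = k" "gradF k \<in> Psi" if "k \<in> gradA ` Psi" for k
    using that gradF_inv by auto
  have dne: "d \<noteq> 0"
  proof
    assume "d = 0"
    hence "gradA \<theta> = gradA \<theta>'" by (simp add: d_def ka_def ka'_def)
    hence "gradF (gradA \<theta>) = gradF (gradA \<theta>')" by simp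
    thus False using gradF_inv \<theta>_in \<theta>'_in \<theta>_ne by simp
  qed
  have HFpd: "inner (HF k v) v > 0" if k: "k \<in> gradA ` Psi" and v: "v \<noteq> 0" for k v
  proof -
    obtain x where x: "x \<in> Psi" "k = gradA x" using k by auto
    have 1: "((gradF \<circ> gradA) has_derivative (HF k \<circ> HA x)) (at x)"
    proof -
      have "(gradF has_derivative HF (gradA x)) (at (gradA x))" using F_hess k x by simp
      from diff_chain_at[OF A_hess[OF x(1)] this] show ?thesis using x by simp
    qed
    have 2: "((gradF \<circ> gradA) has_derivative (\<lambda>x. x)) (at x)"
      by (rule has_derivative_transform_within_open[OF has_derivative_ident Psi_open x(1)])
         (simp add: gradF_inv)
    have id: "HF k \<circ> HA x = (\<lambda>x. x)" using has_derivative_unique[OF 1 2] .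
    have lin: "linear (HA x)" using A_hess[OF x(1)] has_derivative_linear by blast
    have "inj (HA x)" by (rule inj_on_imageI2[of "HF k"]) (simp add: id inj_on_def)
    hence "surj (HA x)" using lin linear_injective_imp_surjective by blast
    then obtain u where u: "v = HA x u" by auto
    have "u \<noteq> 0" using u v lin linear_0 by blast
    hence "inner u (HA x u) > 0" using A_hess_pd x(1) by blast
    moreover have "HF k (HA x u) = u" using fun_cong[OF id, of u] by simp
    ultimately show ?thesis using u by (simp add: inner_commute)
  qed
  have wne: "w l \<noteq> 0" if "l \<in> S" for l using that S_w by force
  have kt_eq: "kt = (\<lambda>l. (l / w l) *\<^sub>R ka + ((1 - l) * c / w l) *\<^sub>R ka')"
    by (rule ext) (simp add: kt_def w_def ka_def ka'_def scaleR_add_right)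
  have kt_der: "(kt has_vector_derivative (c / (w l)^2) *\<^sub>R d) (at l)" if "l \<in> S" for l
  proof -
    have wl: "l + (1 - l) * c \<noteq> 0" using wne[OF that] by (simp add: w_def)
    have a: "((\<lambda>l. l / w l) has_real_derivative c / (w l)^2) (at l)"
      unfolding w_def using wl by (auto intro!: derivative_eq_intros simp: field_simps power2_eq_square)
    have b: "((\<lambda>l. (1 - l) * c / w l) has_real_derivative - c / (w l)^2) (at l)"
      unfolding w_def using wl by (auto intro!: derivative_eq_intros simp: field_simps power2_eq_square)
    have "((\<lambda>l. (l / w l) *\<^sub>R ka + ((1 - l) * c / w l) *\<^sub>R ka') has_vector_derivative
        ((c / (w l)^2) *\<^sub>R ka + (- c / (w l)^2) *\<^sub>R ka')) (at l)"
      using has_vector_derivative_add[OF has_vector_derivative_scaleR[OF a has_vector_derivative_const]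
          has_vector_derivative_scaleR[OF b has_vector_derivative_const]] by simp
    thus ?thesis unfolding kt_eq d_def by (simp add: scaleR_diff_right)
  qed
  have GK: "((\<lambda>l. G (kt l)) has_real_derivative (c / (w l)^2) * inner (et l) d) (at l)"
    if "0 \<le> l" "l \<le> 1" for l
  proof -
    have k: "kt l \<in> gradA ` Psi" using ktdom[OF that] .
    have Ad: "(A has_derivative (\<lambda>h. inner h (gradA (gradF (kt l))))) (at (gradF (kt l)))"
      using A_grad[OF inv2(2)[OF k]] unfolding gderiv_def .
    have Gd: "(G has_derivative (\<lambda>h. inner (gradF (kt l)) h)) (at (kt l))"
      unfolding G_def by (rule G_deriv[OF Ad F_hess[OF k] inv2(1)[OF k]])
    have lS: "l \<in> S" using wpos[OF that] S_w by simp
    have kd: "(kt has_derivative (\<lambda>t. t *\<^sub>R ((c / (w l)^2) *\<^sub>R d))) (at l)"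
      using kt_der[OF lS] unfolding has_vector_derivative_def .
    from diff_chain_at[OF kd Gd]
    have "((\<lambda>l. G (kt l)) has_derivative (\<lambda>t. inner (gradF (kt l)) (t *\<^sub>R ((c / (w l)^2) *\<^sub>R d)))) (at l)"
      by (simp add: o_def)
    thus ?thesis unfolding has_field_derivative_def
      by (rule has_derivative_eq_rhs) (simp add: fun_eq_iff et_def)
  qed
  have etd: "((\<lambda>l. inner (et l) d) has_real_derivative (c / (w l)^2) * inner (HF (kt l) d) d) (at l)"
    if "0 \<le> l" "l \<le> 1" for l
  proof -
    have k: "kt l \<in> gradA ` Psi" using ktdom[OF that] .
    have lS: "l \<in> S" using wpos[OF that] S_w by simp
    have kd: "(kt has_derivative (\<lambda>t. t *\<^sub>R ((c / (w l)^2) *\<^sub>R d))) (at l)"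
      using kt_der[OF lS] unfolding has_vector_derivative_def .
    have lin: "linear (HF (kt l))" using F_hess[OF k] has_derivative_linear by blast
    from diff_chain_at[OF kd F_hess[OF k]]
    have "((\<lambda>l. gradF (kt l)) has_derivative (\<lambda>t. HF (kt l) (t *\<^sub>R ((c / (w l)^2) *\<^sub>R d)))) (at l)"
      by (simp add: o_def)
    from bounded_linear.has_derivative[OF bounded_linear_inner_left this, of d]
    have "((\<lambda>l. inner (et l) d) has_derivative (\<lambda>t. inner (HF (kt l) (t *\<^sub>R ((c / (w l)^2) *\<^sub>R d))) d)) (at l)"
      by (simp add: et_def)
    thus ?thesis unfolding has_field_derivative_def
      by (rule has_derivative_eq_rhs) (simp add: fun_eq_iff linear_cmul[OF lin])
  qed
  define L where "L = (\<lambda>l::real. l * (inner \<theta> ka - A \<theta>) + (1 - l) * c * (inner \<theta>' ka' - A \<theta>'))"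
  define L' where "L' = (inner \<theta> ka - A \<theta>) - c * (inner \<theta>' ka' - A \<theta>')"
  define H1 where "H1 = (\<lambda>l. (1 - c) * G (kt l) + c / w l * inner (et l) d)"
  define Phi' where "Phi' = (\<lambda>l. L' - H1 l)"
  define Phi'' where "Phi'' = (\<lambda>l. - (c^2 / (w l)^3 * inner (HF (kt l) d) d))"
  have Phi_id: "Phi l = L l - w l * G (kt l)" if "l \<in> S" for l
  proof -
    have wl: "w l \<noteq> 0" using wne[OF that] .
    have eq: "w l * inner (et l) (kt l) = l * inner (et l) ka + (1 - l) * c * inner (et l) ka'"
      using wl unfolding kt_eq by (simp add: inner_add_right field_simps)
    have ete: "gradF (kt l) = et l" by (simp add: et_def)
    show ?thesis
      using eq unfolding Phi_def L_def G_def KLdiv_def ka_def[symmetric] ka'_def[symmetric] w_def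
      by (simp add: inner_diff_left algebra_simps ete)
  qed
  have Phi_der: "(Phi has_real_derivative Phi' l) (at l)" if "0 \<le> l" "l \<le> 1" for l
  proof -
    have wl: "0 < w l" using wpos[OF that] .
    have lS: "l \<in> S" using wl S_w by simp
    have w': "(w has_real_derivative (1 - c)) (at l)"
      unfolding w_def by (auto intro!: derivative_eq_intros)
    have Ld: "(L has_real_derivative L') (at l)"
      unfolding L_def L'_def by (auto intro!: derivative_eq_intros simp: algebra_simps)
    have WG: "((\<lambda>l. w l * G (kt l)) has_real_derivative H1 l) (at l)"
      by (rule DERIV_cong[OF DERIV_mult[OF w' GK[OF that]]])
         (use wl in \<open>simp add: H1_def field_simps power2_eq_square\<close>)
    have "((\<lambda>l. L l - w l * G (kt l)) has_real_derivative Phi' l) (at l)"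
      unfolding Phi'_def by (rule DERIV_diff[OF Ld WG])
    thus ?thesis
      by (rule has_field_derivative_transform_within_open[OF _ S_open lS]) (simp add: Phi_id)
  qed
  have Phi'_der: "(Phi' has_real_derivative Phi'' l) (at l)" if "0 \<le> l" "l \<le> 1" for l
  proof -
    have wl: "0 < w l" using wpos[OF that] .
    have cw: "((\<lambda>l. c / w l) has_real_derivative - c * (1 - c) / (w l)^2) (at l)"
      unfolding w_def using wl[unfolded w_def]
      by (auto intro!: derivative_eq_intros simp: field_simps power2_eq_square)
    have "(H1 has_real_derivative - Phi'' l) (at l)"
      unfolding H1_def
      by (rule DERIV_cong[OF DERIV_add[OF DERIV_cmult[OF GK[OF that]] DERIV_mult[OF cw etd[OF that]]]])
         (use wl in \<open>simp add: Phi''_def field_simps power2_eq_square power3_eq_cube\<close>)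
    from DERIV_diff[OF DERIV_const[of L' "at l"] this]
    show ?thesis unfolding Phi'_def by simp
  qed
  have Phi''_neg: "Phi'' l < 0" if "0 \<le> l" "l \<le> 1" for l
  proof -
    have wl: "0 < w l" using wpos[OF that] .
    have "0 < inner (HF (kt l) d) d" using HFpd[OF ktdom[OF that] dne] .
    moreover have "0 < c^2 / (w l)^3" using wl c0 by simp
    ultimately have "0 < c^2 / (w l)^3 * inner (HF (kt l) d) d" using mult_pos_pos by blast
    thus ?thesis unfolding Phi''_def by linarith
  qed
  have dec: "Phi' t < Phi' s" if "0 \<le> s" "s < t" "t \<le> 1" for s t
  proof (rule DERIV_neg_imp_decreasing[OF that(2)])
    fix x assume "s \<le> x" "x \<le> t"
    hence x: "0 \<le> x" "x \<le> 1" using that by linarith+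
    show "\<exists>y. (Phi' has_real_derivative y) (at x) \<and> y < 0"
      using Phi'_der[OF x] Phi''_neg[OF x] by blast
  qed
  have main: "(\<exists>Phi' Phi''. \<forall>l\<in>{0<..<1}.
                (Phi has_real_derivative Phi' l) (at l) \<and>
                (Phi' has_real_derivative Phi'' l) (at l) \<and> Phi'' l < 0)
            \<and> strict_concave_on {0..1} Phi"
  proof
    show "\<exists>Phi' Phi''. \<forall>l\<in>{0<..<1}.
                (Phi has_real_derivative Phi' l) (at l) \<and>
                (Phi' has_real_derivative Phi'' l) (at l) \<and> Phi'' l < 0"
      using Phi_der Phi'_der Phi''_neg by (intro exI[of _ Phi'] exI[of _ Phi'']) auto
    show "strict_concave_on {0..1} Phi"
      unfolding strict_concave_on_def strict_convex_on_def
    proof (intro ballI allI impI)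
      fix x y u :: real
      assume xy: "x \<in> {0..1}" "y \<in> {0..1}" and h: "x \<noteq> y \<and> 0 < u \<and> u < 1 \<and> (1 - u) *\<^sub>R x + u *\<^sub>R y \<in> {0..1}"
      show "- Phi ((1 - u) *\<^sub>R x + u *\<^sub>R y) < (1 - u) * - Phi x + u * - Phi y"
      proof (cases "x < y")
        case True
        have "(1 - u) * Phi x + u * Phi y < Phi ((1 - u) * x + u * y)"
          by (rule concave_aux[of 0 1 Phi Phi', OF Phi_der dec]) (use xy h True in auto)
        thus ?thesis by simp
      next
        case False
        hence yx: "y < x" using h by simp
        have "(1 - (1 - u)) * Phi y + (1 - u) * Phi x < Phi ((1 - (1 - u)) * y + (1 - u) * x)"
          by (rule concave_aux[of 0 1 Phi Phi', OF Phi_der dec]) (use xy h yx in auto)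
        thus ?thesis by (simp add: algebra_simps)
      qed
    qed
  qed
  show ?thesis
    using main unfolding Let_def Phi_def et_def kt_def c_def .
qed

end
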